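(* Let $\tau\ge1$, two candidates $P,Q$, and let $Z^*$ be a point of the metric space minimizing $SC$. If $P$ beats $Q$ under Weighted Majority Rule 3 and $\delta_I=SC(P)/SC(Q)>\tau$, then $SC(P)/SC(Z^* )\le\frac{2\delta_I}{\delta_I-\tau}$.
   Context: Voters $N$ and candidates are points of an arbitrary metric space $(X,d)$; $SC(Y)=\sum_{i\in N}d(i,Y)$ for $Y\in X$. Let $A=\{i: d(i,Q)/d(i,P)\ge\tau\}$ and $B=\{j: d(j,P)/d(j,Q)\ge\tau\}$. Weighted Majority Rule 3 selects $P$ over $Q$ iff $|A|\ge|B|$. *)

theory Defs
  imports "HOL-Analysis.Analysis"
begin

definition SC :: "'v set \<Rightarrow> ('v \<Rightarrow> 'a::metric_space) \<Rightarrow> 'a \<Rightarrow> real" where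
  "SC N loc Y = (\<Sum>i\<in>N. dist (loc i) Y)"

text \<open>A = voters with d(i,Q)/d(i,P) >= tau, written multiplicatively so that a
zero denominator counts as ratio +infinity.\<close>
definition setA :: "real \<Rightarrow> 'v set \<Rightarrow> ('v \<Rightarrow> 'a::metric_space) \<Rightarrow> 'a \<Rightarrow> 'a \<Rightarrow> 'v set" where
  "setA \<tau> N loc P Q = {i\<in>N. dist (loc i) Q \<ge> \<tau> * dist (loc i) P}"

definition setB :: "real \<Rightarrow> 'v set \<Rightarrow> ('v \<Rightarrow> 'a::metric_space) \<Rightarrow> 'a \<Rightarrow> 'a \<Rightarrow> 'v set" where
  "setB \<tau> N loc P Q = {j\<in>N. dist (loc j) P \<ge> \<tau> * dist (loc j) Q}"

definition WMR3_selects :: "real \<Rightarrow> 'v set \<Rightarrow> ('v \<Rightarrow> 'a::metric_space) \<Rightarrow> 'a \<Rightarrow> 'a \<Rightarrow> bool" where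
  "WMR3_selects \<tau> N loc P Q \<longleftrightarrow> card (setA \<tau> N loc P Q) \<ge> card (setB \<tau> N loc P Q)"

end

theory Submission
  imports Defs
begin

lemma key:
  fixes \<tau> :: real and N :: "'v set" and loc :: "'v \<Rightarrow> 'a::metric_space"
    and P Q Z :: 'a
  assumes t: "\<tau> \<ge> 1" and fin: "finite N"
    and w: "WMR3_selects \<tau> N loc P Q"
  shows "SC N loc P - \<tau> * SC N loc Q \<le> 2 * SC N loc Z"
proof -
  define A where "A = setA \<tau> N loc P Q"
  define B where "B = setB \<tau> N loc P Q"
  define c where "c = max 0 (dist Z P - dist Z Q)"
  define f where "f k = (if k \<in> B - A then c else if k \<in> A - B then - c else 0)" for k
  have AN: "A \<subseteq> N" and BN: "B \<subseteq> N" by (auto simp: A_def B_def setA_def setB_def)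
  have cardAB: "card (B - A) \<le> card (A - B)"
  proof -
    have "card A \<ge> card B" using w by (simp add: WMR3_selects_def A_def B_def)
    moreover have "card A = card (A \<inter> B) + card (A - B)"
      using finite_subset[OF AN fin] by (metis Diff_Diff_Int Int_commute card_Diff_subset_Int card_Un_disjoint Diff_disjoint Int_Diff_Un Int_lower1 finite_Diff finite_Int card_Int_Diff)
    moreover have "card B = card (A \<inter> B) + card (B - A)"
      using finite_subset[OF BN fin] by (metis Int_commute card_Int_Diff finite_Int finite_Diff)
    ultimately show ?thesis by linarith
  qed
  have c0: "c \<ge> 0" by (simp add: c_def)
  have sumf: "(\<Sum>k\<in>N. f k) \<le> 0"
  proof -
    have "(\<Sum>k\<in>N. f k) = (\<Sum>k\<in>N. (if k \<in> B - A then c else 0)) + (\<Sum>k\<in>N. (if k \<in> A - B then - c else 0))"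
      by (subst sum.distrib[symmetric]) (rule sum.cong, auto simp: f_def)
    also have "\<dots> = c * card (B - A) - c * card (A - B)"
      proof -
      have e1: "N \<inter> (B - A) = B - A" and e2: "N \<inter> (A - B) = A - B" using AN BN by auto
      show ?thesis using fin by (simp add: sum.If_cases e1 e2 mult.commute del: Diff_iff)
    qed
    also have "\<dots> \<le> 0" using cardAB c0 by (simp add: mult_left_mono)
    finally show ?thesis .
  qed
  have pt: "dist (loc k) P - \<tau> * dist (loc k) Q \<le> 2 * dist (loc k) Z + f k" if "k \<in> N" for k
  proof -
    let ?p = "dist (loc k) P" and ?q = "dist (loc k) Q" and ?z = "dist (loc k) Z"
    have tri1: "dist Z P \<le> ?z + ?p" by (metis dist_commute dist_triangle)
    have tri2: "?q \<le> ?z + dist Z Q" by (metis dist_triangle)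
    have tri3: "?p \<le> ?z + dist Z P" by (metis dist_triangle)
    have tri4: "dist Z Q \<le> ?z + ?q" by (metis dist_commute dist_triangle)
    have q0: "?q \<ge> 0" "?p \<ge> 0" "?z \<ge> 0" by auto
    have tq: "\<tau> * ?q \<ge> ?q" using t q0 by (simp add: mult_right_mono[of 1 \<tau> ?q, simplified])
    show ?thesis
    proof (cases "k \<in> A")
      case True
      hence a: "?q \<ge> \<tau> * ?p" by (simp add: A_def setA_def)
      have "\<tau> * ?p \<ge> ?p" using t q0 by (simp add: mult_right_mono[of 1 \<tau> ?p, simplified])
      hence pq: "?p \<le> ?q" using a by linarith
      have "c \<le> 2 * ?z" unfolding c_def using tri1 tri2 pq q0 by (simp add: max_def)
      moreover have "f k \<ge> - c \<or> f k = 0" using c0 by (auto simp: f_def)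
      ultimately have "f k \<ge> - 2 * ?z" using c0 q0 by auto
      moreover have "?p - \<tau> * ?q \<le> 0" using pq tq by linarith
      ultimately show ?thesis by linarith
    next
      case False
      show ?thesis
      proof (cases "k \<in> B")
        case True
        hence "f k = c" using False by (simp add: f_def)
        moreover have "?p - ?q \<le> 2 * ?z + (dist Z P - dist Z Q)" using tri3 tri4 by linarith
        ultimately show ?thesis using tq unfolding c_def by linarith
      next
        case nB: False
        hence "f k = 0" using False by (simp add: f_def)
        moreover have "?p < \<tau> * ?q" using nB that by (simp add: B_def setB_def)
        ultimately show ?thesis using q0 by linarith
      qed
    qed
  qed
  have "SC N loc P - \<tau> * SC N loc Q = (\<Sum>k\<in>N. dist (loc k) P - \<tau> * dist (loc k) Q)"
    by (simp add: SC_def sum_subtractf sum_distrib_left)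
  also have "\<dots> \<le> (\<Sum>k\<in>N. 2 * dist (loc k) Z + f k)" by (rule sum_mono) (use pt in auto)
  also have "\<dots> = 2 * SC N loc Z + (\<Sum>k\<in>N. f k)" by (simp add: SC_def sum.distrib sum_distrib_left)
  also have "\<dots> \<le> 2 * SC N loc Z" using sumf by simp
  finally show ?thesis .
qed

theorem mainTheorem17:
  fixes \<tau> :: real and N :: "'v set" and loc :: "'v \<Rightarrow> 'a::metric_space"
    and P Q Z :: 'a
  assumes "\<tau> \<ge> 1"
    and "finite N"
    and "\<forall>Y. SC N loc Z \<le> SC N loc Y"
    and "WMR3_selects \<tau> N loc P Q"
    and "SC N loc P / SC N loc Q > \<tau>"
  shows "SC N loc P / SC N loc Z
           \<le> 2 * (SC N loc P / SC N loc Q) / (SC N loc P / SC N loc Q - \<tau>)"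
proof -
  let ?p = "SC N loc P" and ?q = "SC N loc Q" and ?z = "SC N loc Z"
  have k: "?p - \<tau> * ?q \<le> 2 * ?z" using key assms(1,2,4) by blast
  have q0: "?q \<ge> 0" "?z \<ge> 0" "?p \<ge> 0" by (auto simp: SC_def intro: sum_nonneg)
  have qp: "?q > 0" using assms(1,5) q0 by (cases "?q = 0") auto
  have pt: "?p > \<tau> * ?q" using assms(5) qp by (simp add: field_simps)
  have rhs: "2 * (?p / ?q) / (?p / ?q - \<tau>) = 2 * ?p / (?p - \<tau> * ?q)"
    using qp by (simp add: field_simps)
  show ?thesis
  proof (cases "?z = 0")
    case True
    then show ?thesis unfolding rhs using pt q0 by simp
  next
    case False
    hence z: "?z > 0" using q0 by simp
    have "?p / ?z \<le> 2 * ?p / (?p - \<tau> * ?q)"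
      using z pt k q0 mult_left_mono[OF k, of ?p] by (simp add: divide_simps mult.assoc)
    thus ?thesis unfolding rhs .
  qed
qed

end
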